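(* Let $n\ge3$ and let $M\subseteq[n]$ be nonempty with $l(M)=l$. Then $h(M)\le 1+2l\log n$, where $\log$ is the binary logarithm.
   Context: $[n]:=\{0,1,\ldots,n\}$, $\mathbb{N}=\{0,1,2,\ldots\}$. For a set $M$ of integers, $l(M)$ is the maximum number of consecutive integers contained in $M$. For a finite $L\subseteq\mathbb{N}$ and an integer $r$, write $L+r:=\{x+r: x\in L,\ x+r\ge 0\}$. Define $h$ on finite subsets of $\mathbb{N}$ recursively on $|L|$: $h(\emptyset)=0$, and for $L\neq\emptyset$, $$h(L)=1+\max\Big\{h(L\cap(L+1)),\ \max_{M'\in T(L)}\min\{h(L\cap M'),\,h(L\cap(M'-1))\}\Big\},$$ where $T(L)$ is the set of all finite $M'\subseteq\mathbb{N}$ with $M'\notin\{L,L+1\}$ and $0<|M'|\le|L|$. *)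

theory Defs
  imports Complex_Main
begin

definition shift :: "nat set \<Rightarrow> int \<Rightarrow> nat set" where
  "shift L r = {nat (int x + r) | x. x \<in> L \<and> int x + r \<ge> 0}"

definition lrun :: "nat set \<Rightarrow> nat" where
  "lrun M = Max {k. \<exists>a. {a..<a + k} \<subseteq> M}"

definition Tset :: "nat set \<Rightarrow> nat set set" where
  "Tset L = {M'. finite M' \<and> M' \<noteq> L \<and> M' \<noteq> shift L 1 \<and> 0 < card M' \<and> card M' \<le> card L}"

text \<open>Fuel-indexed unfolding of the recursion; since every recursive call is on a
  set of strictly smaller cardinality, fuel card L suffices (see h_rec below).\<close>
fun hh :: "nat \<Rightarrow> nat set \<Rightarrow> nat" where
  "hh 0 L = 0"
| "hh (Suc k) L = (if L = {} then 0 else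
     1 + Max (insert (hh k (L \<inter> shift L 1))
                {min (hh k (L \<inter> M')) (hh k (L \<inter> shift M' (-1))) | M'. M' \<in> Tset L}))"

definition h :: "nat set \<Rightarrow> nat" where
  "h L = hh (card L) L"


lemma nat_int_plus1: "nat (int x + 1) = Suc x" by simp

lemma shift_one: "shift L 1 = Suc ` L"
  unfolding shift_def by (force simp: nat_int_plus1)

lemma card_step1: "finite L \<Longrightarrow> L \<noteq> {} \<Longrightarrow> card (L \<inter> shift L 1) < card L"
proof -
  assume f: "finite L" and ne: "L \<noteq> {}"
  have "Min L \<notin> shift L 1"
  proof
    assume "Min L \<in> shift L 1"
    then obtain x where "x \<in> L" "Min L = Suc x" by (auto simp: shift_one)
    moreover have "Min L \<le> x" using f \<open>x \<in> L\<close> by simp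
    ultimately show False by simp
  qed
  moreover have "Min L \<in> L" using f ne by simp
  ultimately have "L \<inter> shift L 1 \<subset> L" by blast
  thus ?thesis using f by (simp add: psubset_card_mono)
qed

lemma card_step2:
  assumes f: "finite L" and T: "M' \<in> Tset L"
  shows "card (L \<inter> M') < card L"
proof -
  have "\<not> L \<subseteq> M'"
  proof
    assume "L \<subseteq> M'"
    moreover have "finite M'" "card M' \<le> card L" using T by (auto simp: Tset_def)
    ultimately have "L = M'" using card_seteq by blast
    thus False using T by (simp add: Tset_def)
  qed
  hence "L \<inter> M' \<subset> L" by blast
  thus ?thesis using f by (simp add: psubset_card_mono)
qed

lemma card_step3:
  assumes f: "finite L" and T: "M' \<in> Tset L"
  shows "card (L \<inter> shift M' (-1)) < card L"
proof -
  have "\<not> L \<subseteq> shift M' (-1)"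
  proof
    assume "L \<subseteq> shift M' (-1)"
    have "Suc ` L \<subseteq> M'"
    proof
      fix z assume "z \<in> Suc ` L"
      then obtain x where x: "x \<in> L" "z = Suc x" by auto
      with \<open>L \<subseteq> shift M' (-1)\<close> obtain y where
        y: "y \<in> M'" "x = nat (int y + -1)" "int y + -1 \<ge> 0"
        unfolding shift_def by blast
      from y(2,3) have "z = y" using x(2) by linarith
      with y(1) show "z \<in> M'" by simp
    qed
    moreover have "card (Suc ` L) = card L" by (simp add: card_image)
    moreover have "finite M'" "card M' \<le> card L" using T by (auto simp: Tset_def)
    ultimately have "Suc ` L = M'" using card_seteq by metis
    thus False using T by (simp add: Tset_def shift_one)
  qed
  hence "L \<inter> shift M' (-1) \<subset> L" by blast
  thus ?thesis using f by (simp add: psubset_card_mono)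
qed

lemma hh_stable:
  "finite L \<Longrightarrow> card L \<le> f \<Longrightarrow> card L \<le> g \<Longrightarrow> hh f L = hh g L"
proof (induction f arbitrary: g L)
  case 0
  then show ?case by (cases g) auto
next
  case (Suc f)
  show ?case
  proof (cases "L = {}")
    case True
    then show ?thesis by (cases g) auto
  next
    case False
    then obtain g' where g: "g = Suc g'" using Suc.prems by (cases g) auto
    have c: "card L \<ge> 1" using Suc.prems(1) False by (simp add: Suc_le_eq card_gt_0_iff)
    have e1: "hh f (L \<inter> shift L 1) = hh g' (L \<inter> shift L 1)"
      using Suc.IH[of "L \<inter> shift L 1" g'] card_step1[OF Suc.prems(1) False] Suc.prems g by simp
    have e2: "{min (hh f (L \<inter> M')) (hh f (L \<inter> shift M' (-1))) | M'. M' \<in> Tset L}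
           = {min (hh g' (L \<inter> M')) (hh g' (L \<inter> shift M' (-1))) | M'. M' \<in> Tset L}"
    proof -
      have "\<And>M'. M' \<in> Tset L \<Longrightarrow> hh f (L \<inter> M') = hh g' (L \<inter> M') \<and>
              hh f (L \<inter> shift M' (-1)) = hh g' (L \<inter> shift M' (-1))"
      proof -
        fix M' assume T: "M' \<in> Tset L"
        have a: "card (L \<inter> M') < card L" by (rule card_step2[OF Suc.prems(1) T])
        have b: "card (L \<inter> shift M' (-1)) < card L" by (rule card_step3[OF Suc.prems(1) T])
        have "hh f (L \<inter> M') = hh g' (L \<inter> M')"
          by (rule Suc.IH) (use a Suc.prems g in auto)
        moreover have "hh f (L \<inter> shift M' (-1)) = hh g' (L \<inter> shift M' (-1))"
          by (rule Suc.IH) (use b Suc.prems g in auto)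
        ultimately show "?thesis M'" by simp
      qed
      thus ?thesis by (metis (no_types, lifting))
    qed
    show ?thesis using False e1 e2 g by simp
  qed
qed

lemma h_empty: "h {} = 0"
  by (simp add: h_def)

lemma h_rec:
  assumes "finite L" "L \<noteq> {}"
  shows "h L = 1 + Max (insert (h (L \<inter> shift L 1))
                {min (h (L \<inter> M')) (h (L \<inter> shift M' (-1))) | M'. M' \<in> Tset L})"
proof -
  obtain k where k: "card L = Suc k" using assms by (cases "card L") auto
  have s: "\<And>A. finite A \<Longrightarrow> card A < card L \<Longrightarrow> hh k A = h A"
    unfolding h_def using k by (intro hh_stable) auto
  have "h L = hh (Suc k) L" by (simp add: h_def k)
  also have "\<dots> = 1 + Max (insert (h (L \<inter> shift L 1))
                {min (h (L \<inter> M')) (h (L \<inter> shift M' (-1))) | M'. M' \<in> Tset L})"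
    using assms s card_step1 card_step2[OF assms(1)] card_step3[OF assms(1)]
    by (simp, metis (no_types, lifting) finite_Int)
  finally show ?thesis .
qed

end

theory Submission
  imports Defs
begin

lemma hh_le: "hh k L \<le> k"
proof (induction k arbitrary: L)
  case 0 then show ?case by simp
next
  case (Suc k)
  let ?S = "insert (hh k (L \<inter> shift L 1))
                {min (hh k (L \<inter> M')) (hh k (L \<inter> shift M' (-1))) | M'. M' \<in> Tset L}"
  have sub: "?S \<subseteq> {..k}" using Suc.IH by (auto simp: min_le_iff_disj)
  hence "finite ?S" by (rule finite_subset) simp
  hence "Max ?S \<le> k" using sub by (simp add: subset_eq)
  thus ?case by simp
qed

lemma h_le_card: "h L \<le> card L"
  unfolding h_def by (rule hh_le)

lemma mem_shift_m1: "x \<in> shift M (-1) \<longleftrightarrow> Suc x \<in> M"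
proof
  assume "x \<in> shift M (-1)"
  then obtain y where "y \<in> M" "x = nat (int y + -1)" "int y + -1 \<ge> 0"
    unfolding shift_def by blast
  moreover have "Suc x = y" using \<open>x = nat (int y + -1)\<close> \<open>int y + -1 \<ge> 0\<close> by linarith
  ultimately show "Suc x \<in> M" by simp
next
  assume "Suc x \<in> M"
  thus "x \<in> shift M (-1)" unfolding shift_def
    by (intro CollectI exI[of _ "Suc x"]) auto
qed

definition RB :: "nat set \<Rightarrow> nat \<Rightarrow> bool" where
  "RB L l \<longleftrightarrow> (\<forall>a k. {a..<a+k} \<subseteq> L \<longrightarrow> k \<le> l)"

lemma RB_mono: "RB L l \<Longrightarrow> X \<subseteq> L \<Longrightarrow> RB X l"
  unfolding RB_def by blast

lemma F1:
  assumes fin: "finite L" and rb: "RB L l"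
  shows "card L \<le> l * card (L - Suc ` L)"
proof -
  have cov: "L \<subseteq> (\<Union>e\<in>L - Suc ` L. {e..<e+l})"
  proof
    fix x assume x: "x \<in> L"
    define s where "s = (LEAST y. y \<le> x \<and> {y..x} \<subseteq> L)"
    have ex: "x \<le> x \<and> {x..x} \<subseteq> L" using x by simp
    have s1: "s \<le> x \<and> {s..x} \<subseteq> L" unfolding s_def by (rule LeastI[where P="\<lambda>y. y \<le> x \<and> {y..x} \<subseteq> L", OF ex])
    have sL: "s \<in> L" using s1 by auto
    have sE: "s \<notin> Suc ` L"
    proof
      assume "s \<in> Suc ` L"
      then obtain t where t: "t \<in> L" "s = Suc t" by auto
      have "t \<le> x \<and> {t..x} \<subseteq> L"
      proof -
        have "{t..x} = insert t {s..x}" using t s1 by auto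
        thus ?thesis using t s1 by auto
      qed
      hence "s \<le> t" unfolding s_def by (rule Least_le)
      thus False using t by simp
    qed
    have "{s..<s + (x - s + 1)} \<subseteq> L" using s1 by auto
    hence "x - s + 1 \<le> l" using rb unfolding RB_def by blast
    hence "x \<in> {s..<s+l}" using s1 by auto
    thus "x \<in> (\<Union>e\<in>L - Suc ` L. {e..<e+l})" using sL sE by blast
  qed
  have "card L \<le> card (\<Union>e\<in>L - Suc ` L. {e..<e+l})"
    by (rule card_mono[OF _ cov]) (use fin in auto)
  also have "\<dots> \<le> (\<Sum>e\<in>L - Suc ` L. card {e..<e+l})"
    by (rule card_UN_le) (use fin in auto)
  also have "\<dots> = l * card (L - Suc ` L)" by simp
  finally show ?thesis .
qed

lemma card_split: "finite L \<Longrightarrow> card (L \<inter> Suc ` L) + card (L - Suc ` L) = card L"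
  by (metis card_Int_Diff)

lemma F2:
  assumes fin: "finite L" and fM: "finite M'" and cM: "card M' \<le> card L"
  shows "card (L \<inter> M') + card (L \<inter> shift M' (-1)) \<le> card L + card (L \<inter> Suc ` L)"
proof -
  let ?A = "L \<inter> M'" and ?B = "L \<inter> shift M' (-1)"
  have cB: "card (Suc ` ?B) = card ?B" by (simp add: card_image)
  have u: "?A \<union> Suc ` ?B \<subseteq> M'" by (auto simp: mem_shift_m1)
  have i: "?A \<inter> Suc ` ?B \<subseteq> L \<inter> Suc ` L" by auto
  have "card ?A + card (Suc ` ?B) = card (?A \<union> Suc ` ?B) + card (?A \<inter> Suc ` ?B)"
    by (rule card_Un_Int) (use fin in auto)
  also have "\<dots> \<le> card M' + card (L \<inter> Suc ` L)"
    using card_mono[OF fM u] card_mono[OF _ i] fin by (intro add_mono) auto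
  finally show ?thesis using cB cM by linarith
qed

lemma main:
  assumes l1: "l \<ge> 1" and "finite L" and "RB L l" and "L \<noteq> {}"
  shows "(2 * real l / (2 * real l - 1)) ^ h L \<le> (2 * real l / (2 * real l - 1)) * card L"
  using assms(2,3,4)
proof (induction L rule: finite_psubset_induct)
  case (psubset L)
  have fin: "finite L" by fact
  have rb: "RB L l" and ne: "L \<noteq> {}" using psubset.prems by auto
  define \<rho> where "\<rho> = 2 * real l / (2 * real l - 1)"
  have rho1: "\<rho> \<ge> 1" unfolding \<rho>_def using l1 by (simp add: field_simps)
  have cL: "card L \<ge> 1" using fin ne by (simp add: Suc_le_eq card_gt_0_iff)
  have red: "\<rho> ^ h L \<le> \<rho> * card L"
    if X: "X \<subseteq> L" "2 * l * card X \<le> (2 * l - 1) * card L" "h L \<le> 1 + h X" for X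
  proof (cases "X = {}")
    case True
    hence "h L \<le> 1" using X h_empty by simp
    hence "\<rho> ^ h L \<le> \<rho> ^ 1" using rho1 by (intro power_increasing) auto
    also have "\<dots> \<le> \<rho> * card L" using cL rho1 by simp
    finally show ?thesis .
  next
    case False
    have fX: "finite X" using X fin finite_subset by blast
    have ltX: "card X < card L"
    proof -
      have "(2 * l - 1) * card L < 2 * l * card L" using cL l1 by simp
      hence "2 * l * card X < 2 * l * card L" using X(2) by linarith
      thus ?thesis by simp
    qed
    have psX: "X \<subset> L" using X(1) ltX by auto
    have IH: "\<rho> ^ h X \<le> \<rho> * card X"
      using psubset.IH[OF psX RB_mono[OF rb X(1)] False] unfolding \<rho>_def .
    have "real (2 * l * card X) \<le> real ((2 * l - 1) * card L)" using X(2) by linarith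
    hence r: "2 * real l * card X \<le> (2 * real l - 1) * card L" using l1 by (simp add: of_nat_diff)
    have "\<rho> * card X \<le> card L"
      unfolding \<rho>_def using r l1 by (simp add: field_simps)
    have "\<rho> ^ h L \<le> \<rho> ^ (1 + h X)" using rho1 X(3) by (intro power_increasing) auto
    also have "\<dots> = \<rho> * \<rho> ^ h X" by simp
    also have "\<dots> \<le> \<rho> * (\<rho> * card X)" using IH rho1 by simp
    also have "\<dots> \<le> \<rho> * card L" using \<open>\<rho> * card X \<le> card L\<close> rho1 by simp
    finally show ?thesis .
  qed
  have f1: "card L \<le> l * card (L - Suc ` L)" by (rule F1[OF fin rb])
  have f0: "card (L \<inter> Suc ` L) + card (L - Suc ` L) = card L" by (rule card_split[OF fin])
  have fC: "l * card (L \<inter> Suc ` L) \<le> (l - 1) * card L"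
  proof -
    have "l * card (L \<inter> Suc ` L) + l * card (L - Suc ` L) = l * card L"
      using f0 by (metis add_mult_distrib2)
    hence "l * card (L \<inter> Suc ` L) + card L \<le> l * card L" using f1 by linarith
    thus ?thesis by (simp add: diff_mult_distrib)
  qed
  let ?S = "insert (h (L \<inter> shift L 1))
                {min (h (L \<inter> M')) (h (L \<inter> shift M' (-1))) | M'. M' \<in> Tset L}"
  have hs: "\<And>X. X \<subseteq> L \<Longrightarrow> h X \<le> card L"
    using h_le_card card_mono fin le_trans by blast
  have sub: "?S \<subseteq> {..card L}" using hs
    by (auto simp: min_le_iff_disj)
  hence finS: "finite ?S" by (rule finite_subset) simp
  have hL: "h L = 1 + Max ?S" by (rule h_rec[OF fin ne])
  have "Max ?S \<in> ?S" using finS by (rule Max_in) simp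
  then consider "Max ?S = h (L \<inter> shift L 1)"
    | M' where "M' \<in> Tset L" "Max ?S = min (h (L \<inter> M')) (h (L \<inter> shift M' (-1)))"
    by blast
  thus ?case
  proof cases
    case 1
    have "\<rho> ^ h L \<le> \<rho> * card L"
    proof (rule red[of "L \<inter> Suc ` L"])
      show "L \<inter> Suc ` L \<subseteq> L" by auto
      show "h L \<le> 1 + h (L \<inter> Suc ` L)" using hL 1 by (simp add: shift_one)
      have "2 * l * card (L \<inter> Suc ` L) \<le> 2 * ((l - 1) * card L)" using fC by simp
      also have "\<dots> \<le> (2 * l - 1) * card L" using l1 by (simp add: diff_mult_distrib)
      finally show "2 * l * card (L \<inter> Suc ` L) \<le> (2 * l - 1) * card L" .
    qed
    thus ?thesis by (simp add: \<rho>_def)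
  next
    case 2
    have fM: "finite M'" and cM: "card M' \<le> card L" using 2(1) by (auto simp: Tset_def)
    have f2: "card (L \<inter> M') + card (L \<inter> shift M' (-1)) \<le> card L + card (L \<inter> Suc ` L)"
      by (rule F2[OF fin fM cM])
    have sumb: "l * (card (L \<inter> M') + card (L \<inter> shift M' (-1))) \<le> (2 * l - 1) * card L"
    proof -
      have "l * (card (L \<inter> M') + card (L \<inter> shift M' (-1))) \<le> l * (card L + card (L \<inter> Suc ` L))"
        using f2 by simp
      also have "\<dots> = l * card L + l * card (L \<inter> Suc ` L)" by (simp add: add_mult_distrib2)
      also have "\<dots> \<le> l * card L + (l - 1) * card L" using fC by simp
      also have "\<dots> = (2 * l - 1) * card L" using l1 by (simp add: diff_mult_distrib)
      finally show ?thesis .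
    qed
    show ?thesis
    proof (cases "card (L \<inter> M') \<le> card (L \<inter> shift M' (-1))")
      case True
      have "\<rho> ^ h L \<le> \<rho> * card L"
      proof (rule red[of "L \<inter> M'"])
        show "L \<inter> M' \<subseteq> L" by auto
        show "h L \<le> 1 + h (L \<inter> M')" using hL 2 by simp
        have "2 * l * card (L \<inter> M') \<le> l * (card (L \<inter> M') + card (L \<inter> shift M' (-1)))"
          using True by simp
        thus "2 * l * card (L \<inter> M') \<le> (2 * l - 1) * card L" using sumb by linarith
      qed
      thus ?thesis by (simp add: \<rho>_def)
    next
      case False
      have "\<rho> ^ h L \<le> \<rho> * card L"
      proof (rule red[of "L \<inter> shift M' (-1)"])
        show "L \<inter> shift M' (-1) \<subseteq> L" by auto
        show "h L \<le> 1 + h (L \<inter> shift M' (-1))" using hL 2 by simp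
        have "2 * l * card (L \<inter> shift M' (-1)) \<le> l * (card (L \<inter> M') + card (L \<inter> shift M' (-1)))"
          using False by simp
        thus "2 * l * card (L \<inter> shift M' (-1)) \<le> (2 * l - 1) * card L" using sumb by linarith
      qed
      thus ?thesis by (simp add: \<rho>_def)
    qed
  qed
qed

lemma ln_rho:
  assumes "l \<ge> (1::nat)"
  shows "1 / (2 * real l) \<le> ln (2 * real l / (2 * real l - 1))"
proof -
  define \<rho> where "\<rho> = 2 * real l / (2 * real l - 1)"
  have l1: "real l \<ge> 1" using assms by simp
  have rp: "\<rho> > 0" unfolding \<rho>_def using l1 by (simp add: field_simps)
  have inv: "1 / \<rho> = 1 - 1 / (2 * real l)" unfolding \<rho>_def using l1 by (simp add: field_simps)
  have "ln (1 / \<rho>) \<le> 1 / \<rho> - 1" using rp by (intro ln_le_minus_one) simp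
  moreover have "ln (1 / \<rho>) = - ln \<rho>" using rp by (simp add: ln_div)
  ultimately show ?thesis using inv unfolding \<rho>_def[symmetric] by linarith
qed

lemma final_real:
  assumes l1: "l \<ge> (1::nat)" and n1: "n \<ge> (1::nat)"
    and pw: "(2 * real l / (2 * real l - 1)) ^ k \<le> real n"
  shows "real k \<le> 2 * real l * log 2 (real n)"
proof -
  define \<rho> where "\<rho> = 2 * real l / (2 * real l - 1)"
  have lr: "real l \<ge> 1" using l1 by simp
  have rp: "\<rho> > 0" unfolding \<rho>_def using lr by (simp add: field_simps)
  have np: "real n > 0" using n1 by simp
  have "ln (\<rho> ^ k) \<le> ln (real n)" using pw rp np unfolding \<rho>_def[symmetric]
    by (subst ln_le_cancel_iff) auto
  hence a: "real k * ln \<rho> \<le> ln (real n)" using rp by (simp add: ln_realpow)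
  have b: "1 / (2 * real l) \<le> ln \<rho>" unfolding \<rho>_def by (rule ln_rho[OF l1])
  have "real k * (1 / (2 * real l)) \<le> real k * ln \<rho>" using b by (intro mult_left_mono) auto
  hence "real k * (1 / (2 * real l)) \<le> ln (real n)" using a by linarith
  hence c: "real k \<le> 2 * real l * ln (real n)" using lr by (simp add: field_simps)
  have lnn: "ln (real n) \<ge> 0" using n1 by simp
  have l2: "0 < ln (2::real)" "ln (2::real) < 1" using ln_2_less_1 by auto
  have "ln (real n) * ln 2 \<le> ln (real n) * 1" by (rule mult_left_mono) (use l2 lnn in auto)
  hence "ln (real n) \<le> ln (real n) / ln 2" using l2 by (simp add: le_divide_eq)
  hence "ln (real n) \<le> log 2 (real n)" by (simp add: log_def)
  hence "2 * real l * ln (real n) \<le> 2 * real l * log 2 (real n)" using lr by simp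
  thus ?thesis using c by linarith
qed

theorem proposition14:
  fixes n :: nat and M :: "nat set"
  assumes "n \<ge> 3" and "M \<subseteq> {0..n}" and "M \<noteq> {}"
  shows "real (h M) \<le> 1 + 2 * real (lrun M) * log 2 (real n)"
proof -
  have finM: "finite M" using assms(2) finite_subset by blast
  define K where "K = {k. \<exists>a. {a..<a + k} \<subseteq> M}"
  have Kb: "K \<subseteq> {..card M}"
  proof
    fix k assume "k \<in> K"
    then obtain a where "{a..<a + k} \<subseteq> M" unfolding K_def by blast
    hence "card {a..<a + k} \<le> card M" using finM by (rule card_mono[rotated])
    thus "k \<in> {..card M}" by simp
  qed
  hence finK: "finite K" by (rule finite_subset) simp
  have lK: "lrun M = Max K" unfolding lrun_def K_def ..
  have rb: "RB M (lrun M)" unfolding RB_def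
  proof (intro allI impI)
    fix a k assume "{a..<a+k} \<subseteq> M"
    hence "k \<in> K" unfolding K_def by blast
    thus "k \<le> lrun M" unfolding lK using finK by simp
  qed
  obtain a where aM: "a \<in> M" using assms(3) by blast
  have "1 \<in> K" unfolding K_def using aM by (intro CollectI exI[of _ a]) auto
  hence l1: "lrun M \<ge> 1" unfolding lK using finK by (rule Max_ge[rotated])
  have lg: "log 2 (real n) \<ge> 1" using assms(1) by simp
  have cM: "card M \<le> n + 1" using card_mono[OF _ assms(2)] by simp
  show ?thesis
  proof (cases "card M = n + 1")
    case True
    hence "M = {0..n}" using card_subset_eq[OF _ assms(2)] by simp
    hence "{0..<0 + (n+1)} \<subseteq> M" by auto
    hence "n + 1 \<le> lrun M" using rb unfolding RB_def by blast
    hence "h M \<le> lrun M" using h_le_card[of M] True by simp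
    hence "real (h M) \<le> real (lrun M)" by simp
    also have "\<dots> \<le> real (lrun M) * log 2 (real n)"
      using mult_left_mono[OF lg, of "real (lrun M)"] by simp
    finally show ?thesis using lg by simp
  next
    case False
    hence cM2: "card M \<le> n" using cM by simp
    define \<rho> where "\<rho> = 2 * real (lrun M) / (2 * real (lrun M) - 1)"
    have rho1: "\<rho> \<ge> 1" unfolding \<rho>_def using l1 by (simp add: field_simps)
    have m: "\<rho> ^ h M \<le> \<rho> * card M"
      using main[OF l1 finM rb assms(3)] unfolding \<rho>_def .
    show ?thesis
    proof (cases "h M")
      case 0
      have "0 \<le> 2 * real (lrun M) * log 2 (real n)" using lg by simp
      thus ?thesis using 0 by simp
    next
      case (Suc k)
      have "\<rho> * \<rho> ^ k \<le> \<rho> * real n" using m cM2 Suc rho1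
        by (smt (verit) mult_left_mono of_nat_le_iff power_Suc)
      hence "\<rho> ^ k \<le> real n" using rho1 by simp
      hence "real k \<le> 2 * real (lrun M) * log 2 (real n)"
        using final_real[OF l1, of n k] assms(1) unfolding \<rho>_def by simp
      thus ?thesis using Suc by simp
    qed
  qed
qed

end
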